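(* Let $q$ be a prime. For any integer $W\leqslant q$ and integers $a,h$ with $\gcd(ah,q)=1$ we have $$\sum_{w=1}^{W}\sum_{\substack{x\in\mathbb{F}_q\\ x^2=aw}}\mathbf{e}_q(hx)\ll q^{1/2+o(1)},$$ where $o(1)\to 0$ as $q\to\infty$.
   Context: $\mathbf{e}_q(\xi)=\exp(2\pi i\xi/q)$; $\mathbb{F}_q$ is identified with $\{0,\dots,q-1\}$. The implied constant is absolute. *)

theory Defs
  imports "HOL-Analysis.Analysis"
begin

definition eq :: "nat \<Rightarrow> int \<Rightarrow> complex" where
  "eq q \<xi> = exp (2 * of_real pi * \<i> * of_int \<xi> / of_nat q)"

definition S :: "nat \<Rightarrow> int \<Rightarrow> int \<Rightarrow> int \<Rightarrow> complex" where
  "S q W a h = (\<Sum>w\<in>{1..W}. \<Sum>x\<in>{x\<in>{0..<int q}. x^2 mod int q = (a * w) mod int q}. eq q (h * x))"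

end

theory Submission imports Defs "HOL-Analysis.Harmonic_Numbers" "HOL-Real_Asymp.Real_Asymp" begin


lemma eq_add: "eq q (a + b) = eq q a * eq q b"
  unfolding eq_def by (simp add: distrib_left add_divide_distrib exp_add[symmetric])

lemma eq_uminus: "eq q (- a) = cnj (eq q a)"
  unfolding eq_def by (simp add: exp_cnj)

lemma eq_mult_q: assumes "q > 0" shows "eq q (int q * m) = 1"
proof -
  have "2 * of_real pi * \<i> * of_int (int q * m) / of_nat q = \<i> * (of_int m * (of_real pi * 2))"
    using assms by (simp add: field_simps)
  then show ?thesis unfolding eq_def by simp
qed

lemma eq_cong: assumes "q > 0" "a mod int q = b mod int q" shows "eq q a = eq q b"
proof -
  obtain m where "a = b + int q * m"
    using assms(2) by (metis mod_eqE mult.commute eq_diff_eq' mod_eq_dvd_iff dvd_def)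
  then show ?thesis using eq_add eq_mult_q[OF assms(1)] by simp
qed

lemma eq_zero: "eq q 0 = 1"
  by (simp add: eq_def)

lemma norm_eq [simp]: "norm (eq q a) = 1"
  unfolding eq_def by (simp add: norm_exp)

lemma eq_pow: "eq q (k * int n) = eq q k ^ n"
  unfolding eq_def by (simp add: exp_of_nat_mult[symmetric] field_simps)

lemma eq_eq_1: assumes "q > 0" shows "eq q k = 1 \<longleftrightarrow> int q dvd k"
proof
  assume "int q dvd k" then obtain m where "k = int q * m" by auto
  then show "eq q k = 1" using eq_mult_q[OF assms] by simp
next
  assume "eq q k = 1"
  then obtain n::int where "2 * pi * k / q = of_int (2 * n) * pi"
    unfolding eq_def exp_eq_1 by auto
  then have "real_of_int k = real_of_int (n * int q)" using assms by (simp add: field_simps)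
  then have "k = n * int q" by (metis of_int_eq_iff)
  then show "int q dvd k" by simp
qed

lemma sum_int_range: "(\<Sum>x\<in>{0..<int q}. g x) = (\<Sum>n<q. g (int n))"
proof -
  have "{0..<int q} = int ` {..<q}" using image_int_atLeastLessThan[of 0 q] by (simp add: lessThan_atLeast0)
  then show ?thesis by (simp add: sum.reindex)
qed

lemma orth_nat: assumes "q > 0"
  shows "(\<Sum>n<q. eq q (k * int n)) = (if int q dvd k then of_nat q else 0)"
proof (cases "int q dvd k")
  case True
  then have "eq q k = 1" using eq_eq_1[OF assms] by simp
  then show ?thesis using True by (simp add: eq_pow)
next
  case False
  then have z: "eq q k \<noteq> 1" using eq_eq_1[OF assms] by simp
  have "eq q k ^ q = 1" using eq_pow[of q k q] eq_eq_1[OF assms, of "k * int q"] by simp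
  then show ?thesis using False z by (simp add: eq_pow geometric_sum)
qed

lemma orth_int: assumes "q > 0"
  shows "(\<Sum>x\<in>{0..<int q}. eq q (k * x)) = (if int q dvd k then of_nat q else 0)"
  using orth_nat[OF assms] by (simp add: sum_int_range)

lemma shift_sum: assumes "q > 0" and per: "\<And>x. g (x mod int q) = g x"
  shows "(\<Sum>x\<in>{0..<int q}. g x) = (\<Sum>d\<in>{0..<int q}. g (y + d))"
proof -
  have "(\<Sum>d\<in>{0..<int q}. g ((y + d) mod int q)) = (\<Sum>x\<in>{0..<int q}. g x)"
  proof (rule sum.reindex_bij_witness[where i = "\<lambda>x. (x - y) mod int q" and j = "\<lambda>d. (y + d) mod int q"])
    fix d :: int assume d: "d \<in> {0..<int q}"
    have "((y + d) mod int q - y) mod int q = (y + d - y) mod int q" by (rule mod_diff_left_eq)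
    also have "\<dots> = d" using d by simp
    finally show "((y + d) mod int q - y) mod int q = d" .
    show "(y + d) mod int q \<in> {0..<int q}" using assms(1) by simp
  next
    fix x :: int assume x: "x \<in> {0..<int q}"
    have "(y + (x - y) mod int q) mod int q = (y + (x - y)) mod int q" by (rule mod_add_right_eq)
    also have "\<dots> = x" using x by simp
    finally show "(y + (x - y) mod int q) mod int q = x" .
    show "(x - y) mod int q \<in> {0..<int q}" using assms(1) by simp
  qed (rule refl)
  then show ?thesis using per by simp
qed

lemma gauss_sq:
  assumes pq: "prime q" and q2: "q \<noteq> 2" and c: "\<not> int q dvd c"
  shows "(norm (\<Sum>x\<in>{0..<int q}. eq q (c * x^2 + h * x)))^2 = real q"
proof -
  define f where "f x = c * x^2 + h * x" for x :: int
  have q0: "q > 0" using pq prime_gt_0_nat by blast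
  have pqi: "prime (int q)" using pq by simp
  have n2: "\<not> int q dvd 2"
  proof
    assume "int q dvd 2"
    then have "q dvd 2" by (metis int_dvd_int_iff of_nat_numeral)
    then have "q \<le> 2" by (simp add: dvd_imp_le)
    with pq q2 show False using prime_ge_2_nat[OF pq] by simp
  qed
  let ?G = "\<Sum>x\<in>{0..<int q}. eq q (f x)"
  have "complex_of_real ((norm ?G)^2) = ?G * cnj ?G" by (rule complex_norm_square)
  also have "\<dots> = (\<Sum>y\<in>{0..<int q}. \<Sum>x\<in>{0..<int q}. eq q (f x - f y))"
  proof -
    have "cnj ?G = (\<Sum>y\<in>{0..<int q}. eq q (- f y))" by (simp add: eq_uminus)
    then have "?G * cnj ?G = (\<Sum>x\<in>{0..<int q}. \<Sum>y\<in>{0..<int q}. eq q (f x) * eq q (- f y))"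
      by (simp add: sum_product)
    also have "\<dots> = (\<Sum>x\<in>{0..<int q}. \<Sum>y\<in>{0..<int q}. eq q (f x - f y))"
      by (simp add: eq_add[symmetric])
    also have "\<dots> = (\<Sum>y\<in>{0..<int q}. \<Sum>x\<in>{0..<int q}. eq q (f x - f y))"
      by (rule sum.swap)
    finally show ?thesis .
  qed
  also have "\<dots> = (\<Sum>y\<in>{0..<int q}. \<Sum>d\<in>{0..<int q}. eq q (f (y + d) - f y))"
  proof (rule sum.cong[OF refl])
    fix y
    show "(\<Sum>x\<in>{0..<int q}. eq q (f x - f y)) = (\<Sum>d\<in>{0..<int q}. eq q (f (y + d) - f y))"
    proof (rule shift_sum[OF q0])
      fix x
      have "(f (x mod int q) - f y) mod int q = (f x - f y) mod int q"
      proof -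
        have "(c*(x mod int q)^2 + h*(x mod int q)) mod int q = (c*x^2+h*x) mod int q"
          by (metis mod_add_cong mod_mult_right_eq power_mod)
        then show ?thesis unfolding f_def by (rule mod_diff_cong) simp
      qed
      then show "eq q (f (x mod int q) - f y) = eq q (f x - f y)" by (rule eq_cong[OF q0])
    qed
  qed
  also have "\<dots> = (\<Sum>y\<in>{0..<int q}. \<Sum>d\<in>{0..<int q}. eq q (c * d^2 + h * d) * eq q ((2 * c * d) * y))"
  proof (rule sum.cong[OF refl], rule sum.cong[OF refl])
    fix y d
    have "f (y + d) - f y = (c * d^2 + h * d) + (2 * c * d) * y"
      unfolding f_def by (simp add: power2_eq_square algebra_simps)
    then show "eq q (f (y + d) - f y) = eq q (c * d^2 + h * d) * eq q ((2 * c * d) * y)"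
      by (simp only: eq_add)
  qed
  also have "\<dots> = (\<Sum>d\<in>{0..<int q}. eq q (c * d^2 + h * d) * (\<Sum>y\<in>{0..<int q}. eq q ((2 * c * d) * y)))"
    by (subst sum.swap) (simp add: sum_distrib_left)
  also have "\<dots> = (\<Sum>d\<in>{0..<int q}. if d = 0 then of_nat q else 0)"
  proof (rule sum.cong[OF refl])
    fix d assume d: "d \<in> {0..<int q}"
    have "int q dvd 2 * c * d \<longleftrightarrow> d = 0"
    proof
      assume "int q dvd 2 * c * d"
      then have "int q dvd d" using pqi n2 c by (simp add: prime_dvd_mult_iff)
      then show "d = 0" using d by (metis atLeastLessThan_iff zdvd_not_zless order_le_less)
    qed simp
    then show "eq q (c * d^2 + h * d) * (\<Sum>y\<in>{0..<int q}. eq q ((2 * c * d) * y)) = (if d = 0 then of_nat q else 0)"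
      using orth_int[OF q0, of "2 * c * d"] by (cases "d = 0") (simp_all add: eq_zero)
  qed
  also have "\<dots> = of_nat q" using q0 by simp
  finally have "complex_of_real ((norm ?G)^2) = complex_of_real (real q)" by simp
  then show ?thesis unfolding f_def by (simp only: of_real_eq_iff)
qed




lemma jordan: assumes "0 \<le> x" "x \<le> pi/2" shows "2 * x / pi \<le> sin x"
proof -
  have cv: "convex_on {0..pi} (\<lambda>x. - sin x)"
  proof (rule convex_on_realI[where f' = "\<lambda>x. - cos x"])
    show "connected {0..pi}" by simp
    fix x assume "x \<in> {0..pi}"
    show "((\<lambda>x. - sin x) has_real_derivative - cos x) (at x)"
      by (auto intro!: derivative_eq_intros)
  next
    fix x y assume "x \<in> {0..pi}" "y \<in> {0..pi}" "x \<le> y"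
    then show "- cos x \<le> - cos y" using cos_monotone_0_pi_le by auto
  qed
  define t where "t = 2 * x / pi"
  have t: "0 \<le> t" "t \<le> 1" using assms pi_gt_zero unfolding t_def by (auto simp: field_simps)
  have "- sin ((1 - t) *\<^sub>R 0 + t *\<^sub>R (pi/2)) \<le> (1 - t) * (- sin 0) + t * (- sin (pi/2))"
    by (rule convex_onD[OF cv]) (use t pi_gt_zero in auto)
  moreover have "(1 - t) *\<^sub>R 0 + t *\<^sub>R (pi/2) = x" unfolding t_def by simp
  ultimately show ?thesis unfolding t_def by simp
qed

lemma sin_lower:
  assumes "0 < t" "t < q"
  shows "1 / sin (pi * real t / real q) \<le> real q / (2 * real t) + real q / (2 * real (q - t))"
proof -
  have q0: "real q > 0" using assms by simp
  have key: "2 * real m / real q \<le> sin (pi * real t / real q)" if m: "0 < m" "2 * m \<le> q" and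
     s: "sin (pi * real t / real q) = sin (pi * real m / real q)" for m
  proof -
    have "0 \<le> pi * real m / real q" using q0 by simp
    moreover have "pi * real m / real q \<le> pi / 2"
      using m q0 pi_gt_zero by (simp add: field_simps)
    ultimately have "2 * (pi * real m / real q) / pi \<le> sin (pi * real m / real q)" by (rule jordan)
    then show ?thesis using s by simp
  qed
  have pos: "0 < sin (pi * real t / real q)"
    using assms q0 by (intro sin_gt_zero) (auto simp: field_simps)
  have bnd: "1 / sin (pi * real t / real q) \<le> real q / (2 * real m)"
    if m: "0 < m" "2 * m \<le> q" and s: "sin (pi * real t / real q) = sin (pi * real m / real q)" for m
  proof -
    have "2 * real m / real q \<le> sin (pi * real t / real q)" using key[OF m s] .
    then have "1 / sin (pi * real t / real q) \<le> 1 / (2 * real m / real q)"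
      using m q0 pos by (intro divide_left_mono) auto
    then show ?thesis by simp
  qed
  show ?thesis
  proof (cases "2 * t \<le> q")
    case True
    then have "1 / sin (pi * real t / real q) \<le> real q / (2 * real t)" using bnd[of t] assms by simp
    moreover have "0 \<le> real q / (2 * real (q - t))" by simp
    ultimately show ?thesis by (simp add: add_increasing2)
  next
    case False
    have "sin (pi * real t / real q) = sin (pi - pi * real t / real q)" by simp
    also have "pi - pi * real t / real q = pi * real (q - t) / real q"
      using assms q0 by (simp add: field_simps of_nat_diff)
    finally have "1 / sin (pi * real t / real q) \<le> real q / (2 * real (q - t))"
      using bnd[of "q - t"] False assms by simp
    moreover have "0 \<le> real q / (2 * real t)" by simp
    ultimately show ?thesis by (simp add: add_increasing)
  qed
qed

lemma dirichlet:
  assumes "0 < t" "t < q"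
  shows "norm (\<Sum>w\<in>{1..int n}. eq q (- int t * w)) \<le> 1 / sin (pi * real t / real q)"
proof -
  have q0: "q > 0" using assms by simp
  define z where "z = eq q (- int t)"
  have "{1..int n} = int ` {1..n}" by (simp add: image_int_atLeastAtMost)
  then have "(\<Sum>w\<in>{1..int n}. eq q (- int t * w)) = (\<Sum>k\<in>{1..n}. z ^ k)"
    by (simp add: sum.reindex z_def eq_pow[symmetric])
  also have "\<dots> = (\<Sum>k<n. z ^ Suc k)"
    by (simp add: sum.atLeast1_atMost_eq)
  also have "\<dots> = z * (\<Sum>k<n. z ^ k)" by (simp add: sum_distrib_left)
  finally have A: "(\<Sum>w\<in>{1..int n}. eq q (- int t * w)) = z * (\<Sum>k<n. z ^ k)" .
  have ez: "z = exp (\<i> * of_real (- 2 * pi * real t / real q))"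
    unfolding z_def eq_def by (simp add: field_simps)
  have "norm (z - 1) = 2 * \<bar>sin (- 2 * pi * real t / real q / 2)\<bar>"
    unfolding ez by (rule dist_exp_i_1)
  also have "\<dots> = 2 * sin (pi * real t / real q)"
  proof -
    have "0 < sin (pi * real t / real q)"
      using assms by (intro sin_gt_zero) (auto simp: field_simps)
    moreover have "- 2 * pi * real t / real q / 2 = - (pi * real t / real q)" by simp
    ultimately show ?thesis by simp
  qed
  finally have nz: "norm (z - 1) = 2 * sin (pi * real t / real q)" .
  have spos: "0 < sin (pi * real t / real q)"
    using assms by (intro sin_gt_zero) (auto simp: field_simps)
  then have z1: "z \<noteq> 1" using nz by auto
  have nzn: "norm z = 1" unfolding z_def by simp
  have "norm (z ^ n - 1) \<le> 2"
    using norm_triangle_ineq4[of "z^n" 1] nzn by (simp add: norm_power)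
  have "norm (z * (\<Sum>k<n. z ^ k)) = norm (z ^ n - 1) / norm (z - 1)"
    using z1 nzn by (simp add: geometric_sum norm_mult norm_divide)
  also have "\<dots> \<le> 2 / (2 * sin (pi * real t / real q))"
    unfolding nz using \<open>norm (z ^ n - 1) \<le> 2\<close> spos by (intro divide_right_mono) auto
  finally show ?thesis using A by simp
qed

lemma harm_bound: assumes "q > 0"
  shows "(\<Sum>t\<in>{1..<q}. real q / (2 * real t) + real q / (2 * real (q - t))) \<le> real q * (1 + ln (real q))"
proof -
  have "(\<Sum>t\<in>{1..<q}. real q / (2 * real (q - t))) = (\<Sum>t\<in>{1..<q}. real q / (2 * real t))"
  proof -
    have "(\<Sum>t\<in>{1..q-1}. real q / (2 * real (q - t))) = (\<Sum>t\<in>{1..q-1}. real q / (2 * real t))"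
      using sum.atLeastAtMost_rev[of "\<lambda>t. real q / (2 * real t)" 1 "q-1"] assms
      by (metis Nat.add_diff_assoc2 Suc_eq_plus1 Suc_pred' le_add2)
    moreover have "{1..<q} = {1..q-1}" using assms by auto
    ultimately show ?thesis by simp
  qed
  then have "(\<Sum>t\<in>{1..<q}. real q / (2 * real t) + real q / (2 * real (q - t))) = real q * (\<Sum>t\<in>{1..<q}. 1 / real t)"
    by (simp add: sum.distrib sum_distrib_left)
  also have "(\<Sum>t\<in>{1..<q}. 1 / real t) = harm (q - 1)"
  proof -
    have "{1..<q} = {1..q-1}" using assms by auto
    then show ?thesis by (simp add: harm_def inverse_eq_divide)
  qed
  also have "harm (q - 1) \<le> 1 + ln (real q)"
  proof (cases "q = 1")
    case True then show ?thesis by (simp add: harm_def)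
  next
    case False
    then have "harm (q - 1) - ln (real (q - 1)) \<le> harm 1 - ln (real (1::nat))"
      using assms by (intro euler_mascheroni_sequence_decreasing) auto
    moreover have "ln (real (q - 1)) \<le> ln (real q)" using False assms by (subst ln_le_cancel_iff) auto
    ultimately show ?thesis by (simp add: harm_def)
  qed
  finally show ?thesis using assms by (simp add: mult_left_mono)
qed




lemma main_bound:
  assumes pq: "prime q" and q2: "q \<noteq> 2" and cop: "coprime (a * h) (int q)"
  shows "norm (S q (int n) a h) \<le> sqrt (real q) * (1 + ln (real q))"
proof -
  have q0: "q > 0" using pq prime_gt_0_nat by blast
  have q1: "q > 1" using pq prime_gt_1_nat by blast
  have pqi: "prime (int q)" using pq by simp
  have cah: "coprime a (int q) \<and> coprime h (int q)" using cop by (simp only: coprime_mult_left_iff)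
  then have ca: "coprime a (int q)" and ch: "coprime h (int q)" by blast+
  obtain b v where bv: "b * a + v * int q = gcd a (int q)" using bezout_int by blast
  then have "b * a + v * int q = 1" using ca by simp
  then have "a * b - 1 = int q * (- v)" by (simp add: algebra_simps)
  then have abd: "int q dvd a * b - 1" by (metis dvd_triv_left)
  have nh: "\<not> int q dvd h"
  proof
    assume "int q dvd h"
    then have "is_unit (int q)" by (rule coprime_common_divisor[OF ch]) simp
    then show False using q1 by simp
  qed
  have nb: "\<not> int q dvd b"
  proof
    assume "int q dvd b"
    then have "int q dvd a * b" by simp
    then have "int q dvd a * b - (a * b - 1)" using abd by (rule dvd_diff)
    then have "int q dvd 1" by simp
    then show False using q1 by simp
  qed
  have cond: "(x^2 mod int q = (a * w) mod int q) \<longleftrightarrow> int q dvd (b * x^2 - w)" for x w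
  proof
    assume "x^2 mod int q = (a * w) mod int q"
    then have d1: "int q dvd x^2 - a * w" by (simp add: mod_eq_dvd_iff)
    then have "int q dvd b * (x^2 - a * w)" by simp
    moreover have "int q dvd (a * b - 1) * w" using abd by simp
    ultimately have "int q dvd b * (x^2 - a * w) + (a * b - 1) * w" by (rule dvd_add)
    then show "int q dvd (b * x^2 - w)" by (simp add: algebra_simps)
  next
    assume "int q dvd (b * x^2 - w)"
    then have "int q dvd a * (b * x^2 - w)" by simp
    moreover have "int q dvd (a * b - 1) * x^2" using abd by simp
    ultimately have "int q dvd a * (b * x^2 - w) - (a * b - 1) * x^2" by (rule dvd_diff)
    then have "int q dvd x^2 - a * w" by (simp add: algebra_simps)
    then show "x^2 mod int q = (a * w) mod int q" by (simp add: mod_eq_dvd_iff)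
  qed
  define A where "A t = (\<Sum>w\<in>{1..int n}. eq q (- int t * w))" for t :: nat
  define G where "G t = (\<Sum>x\<in>{0..<int q}. eq q ((int t * b) * x^2 + h * x))" for t :: nat
  have ind: "(if int q dvd (b * x^2 - w) then 1 else 0) = (1 / of_nat q) * (\<Sum>t<q. eq q ((b * x^2 - w) * int t))" for x w
    using q0 by (simp add: orth_nat)
  have "S q (int n) a h = (\<Sum>w\<in>{1..int n}. \<Sum>x\<in>{0..<int q}. (if int q dvd (b * x^2 - w) then 1 else 0) * eq q (h * x))"
    unfolding S_def
  proof (rule sum.cong[OF refl])
    fix w
    have "(\<Sum>x\<in>{x\<in>{0..<int q}. x^2 mod int q = (a * w) mod int q}. eq q (h * x)) = (\<Sum>x\<in>{0..<int q}. if x^2 mod int q = (a * w) mod int q then eq q (h * x) else 0)"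
      by (rule sum.inter_filter) simp
    also have "\<dots> = (\<Sum>x\<in>{0..<int q}. (if int q dvd (b * x^2 - w) then 1 else 0) * eq q (h * x))"
      by (rule sum.cong[OF refl]) (simp add: cond)
    finally show "(\<Sum>x\<in>{x\<in>{0..<int q}. x^2 mod int q = (a * w) mod int q}. eq q (h * x)) = (\<Sum>x\<in>{0..<int q}. (if int q dvd (b * x^2 - w) then 1 else 0) * eq q (h * x))" .
  qed
  also have "\<dots> = (\<Sum>w\<in>{1..int n}. \<Sum>x\<in>{0..<int q}. \<Sum>t<q. (1 / of_nat q) * (eq q (- int t * w) * eq q ((int t * b) * x^2 + h * x)))"
  proof (intro sum.cong refl)
    fix w x
    have "(if int q dvd (b * x^2 - w) then 1 else 0) * eq q (h * x) = (1 / of_nat q) * (\<Sum>t<q. eq q ((b * x^2 - w) * int t) * eq q (h * x))"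
      unfolding ind by (simp add: sum_distrib_right)
    also have "\<dots> = (\<Sum>t<q. (1 / of_nat q) * (eq q (- int t * w) * eq q ((int t * b) * x^2 + h * x)))"
    proof -
      have "eq q ((b * x^2 - w) * int t) * eq q (h * x) = eq q (- int t * w) * eq q ((int t * b) * x^2 + h * x)" for t
      proof -
        have "(b * x^2 - w) * int t + h * x = - int t * w + ((int t * b) * x^2 + h * x)" by (simp add: algebra_simps)
        then show ?thesis by (metis eq_add)
      qed
      then show ?thesis by (simp add: sum_distrib_left)
    qed
    finally show "(if int q dvd (b * x^2 - w) then 1 else 0) * eq q (h * x) = (\<Sum>t<q. (1 / of_nat q) * (eq q (- int t * w) * eq q ((int t * b) * x^2 + h * x)))" .
  qed
  also have "\<dots> = (\<Sum>w\<in>{1..int n}. \<Sum>t<q. \<Sum>x\<in>{0..<int q}. (1 / of_nat q) * (eq q (- int t * w) * eq q ((int t * b) * x^2 + h * x)))"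
    by (rule sum.cong[OF refl], rule sum.swap)
  also have "\<dots> = (\<Sum>t<q. \<Sum>w\<in>{1..int n}. \<Sum>x\<in>{0..<int q}. (1 / of_nat q) * (eq q (- int t * w) * eq q ((int t * b) * x^2 + h * x)))"
    by (rule sum.swap)
  also have "\<dots> = (\<Sum>t<q. (1 / of_nat q) * (A t * G t))"
  proof (rule sum.cong[OF refl])
    fix t
    have "A t * G t = (\<Sum>w\<in>{1..int n}. \<Sum>x\<in>{0..<int q}. eq q (- int t * w) * eq q ((int t * b) * x^2 + h * x))"
      unfolding A_def G_def by (rule sum_product)
    then show "(\<Sum>w\<in>{1..int n}. \<Sum>x\<in>{0..<int q}. (1 / of_nat q) * (eq q (- int t * w) * eq q ((int t * b) * x^2 + h * x))) = (1 / of_nat q) * (A t * G t)"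
      by (simp add: sum_distrib_left)
  qed
  finally have Seq: "S q (int n) a h = (\<Sum>t<q. (1 / of_nat q) * (A t * G t))" .
  have G0: "G 0 = 0" unfolding G_def using orth_int[OF q0, of h] nh by (simp add: mult.commute)
  have bound: "norm (A t * G t) \<le> sqrt (real q) * (real q / (2 * real t) + real q / (2 * real (q - t)))"
    if t: "t \<in> {1..<q}" for t
  proof -
    have "\<not> int q dvd int t * b"
    proof
      assume "int q dvd int t * b"
      then have "int q dvd int t" using nb pqi by (simp add: prime_dvd_mult_iff)
      then show False using t by (auto dest: zdvd_imp_le)
    qed
    then have "(norm (G t))^2 = real q" unfolding G_def by (rule gauss_sq[OF pq q2])
    then have nG: "norm (G t) = sqrt (real q)" by (metis norm_ge_zero real_sqrt_unique)
    have "norm (A t) \<le> 1 / sin (pi * real t / real q)" unfolding A_def using t by (intro dirichlet) auto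
    also have "\<dots> \<le> real q / (2 * real t) + real q / (2 * real (q - t))" using t by (intro sin_lower) auto
    finally have "norm (A t) \<le> real q / (2 * real t) + real q / (2 * real (q - t))" .
    then have "sqrt (real q) * norm (A t) \<le> sqrt (real q) * (real q / (2 * real t) + real q / (2 * real (q - t)))"
      by (rule mult_left_mono) simp
    then show ?thesis using nG by (simp add: norm_mult mult.commute)
  qed
  have T: "(\<Sum>t\<in>{0..<q}. norm (A t * G t)) \<le> sqrt (real q) * (real q * (1 + ln (real q)))"
  proof -
    have "(\<Sum>t\<in>{0..<q}. norm (A t * G t)) = (\<Sum>t\<in>{1..<q}. norm (A t * G t))"
      using q0 by (simp add: sum.atLeast_Suc_lessThan G0)
    also have "\<dots> \<le> (\<Sum>t\<in>{1..<q}. sqrt (real q) * (real q / (2 * real t) + real q / (2 * real (q - t))))"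
      by (rule sum_mono) (rule bound)
    also have "\<dots> = sqrt (real q) * (\<Sum>t\<in>{1..<q}. real q / (2 * real t) + real q / (2 * real (q - t)))"
      by (simp add: sum_distrib_left)
    also have "\<dots> \<le> sqrt (real q) * (real q * (1 + ln (real q)))"
      by (intro mult_left_mono harm_bound q0) simp
    finally show ?thesis .
  qed
  have "norm (S q (int n) a h) \<le> (\<Sum>t<q. norm ((1 / of_nat q) * (A t * G t)))"
    unfolding Seq by (rule norm_sum)
  also have "\<dots> = (1 / real q) * (\<Sum>t\<in>{0..<q}. norm (A t * G t))"
    by (simp add: norm_mult norm_divide sum_distrib_left lessThan_atLeast0)
  also have "\<dots> \<le> (1 / real q) * (sqrt (real q) * (real q * (1 + ln (real q))))"
    using T by (rule mult_left_mono) simp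
  also have "\<dots> = sqrt (real q) * (1 + ln (real q))"
    using q0 by simp
  finally show ?thesis .
qed




lemma trivial_bound: "norm (S q (int n) a h) \<le> real n * real q"
proof -
  have "norm (S q (int n) a h) \<le> (\<Sum>w\<in>{1..int n}. norm (\<Sum>x\<in>{x\<in>{0..<int q}. x^2 mod int q = (a * w) mod int q}. eq q (h * x)))"
    unfolding S_def by (rule norm_sum)
  also have "\<dots> \<le> (\<Sum>w\<in>{1..int n}. real q)"
  proof (rule sum_mono)
    fix w
    have "norm (\<Sum>x\<in>{x\<in>{0..<int q}. x^2 mod int q = (a * w) mod int q}. eq q (h * x))
        \<le> (\<Sum>x\<in>{x\<in>{0..<int q}. x^2 mod int q = (a * w) mod int q}. norm (eq q (h * x)))" by (rule norm_sum)
    also have "\<dots> = real (card {x\<in>{0..<int q}. x^2 mod int q = (a * w) mod int q})" by simp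
    also have "\<dots> \<le> real (card {0..<int q})" by (intro of_nat_mono card_mono) auto
    finally show "norm (\<Sum>x\<in>{x\<in>{0..<int q}. x^2 mod int q = (a * w) mod int q}. eq q (h * x)) \<le> real q" by simp
  qed
  also have "\<dots> = real n * real q" by simp
  finally show ?thesis .
qed




theorem lemma3p2:
  shows "\<exists>C>0. \<exists>\<epsilon>::nat \<Rightarrow> real. \<epsilon> \<longlonglongrightarrow> 0 \<and>
    (\<forall>q W a h. prime q \<longrightarrow> W \<le> int q \<longrightarrow> coprime (a * h) (int q) \<longrightarrow>
       norm (S q W a h) \<le> C * real q powr (1/2 + \<epsilon> q))"
proof -
  define \<epsilon> where "\<epsilon> q = (if q \<le> 1 then 0 else ln (1 + ln (real q)) / ln (real q))" for q :: nat
  have lim: "\<epsilon> \<longlonglongrightarrow> 0"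
  proof -
    have "(\<lambda>q::nat. ln (1 + ln (real q)) / ln (real q)) \<longlonglongrightarrow> 0" by real_asymp
    moreover have "eventually (\<lambda>q. ln (1 + ln (real q)) / ln (real q) = \<epsilon> q) sequentially"
      using eventually_gt_at_top[of 1] by eventually_elim (simp add: \<epsilon>_def)
    ultimately show ?thesis by (rule Lim_transform_eventually)
  qed
  have key: "norm (S q W a h) \<le> 3 * real q powr (1/2 + \<epsilon> q)"
    if pq: "prime q" and Wq: "W \<le> int q" and cop: "coprime (a * h) (int q)" for q W a h
  proof -
    have q2: "q \<ge> 2" using prime_ge_2_nat[OF pq] .
    have lnq: "ln (real q) > 0" using q2 by simp
    have lnq1: "0 \<le> ln (1 + ln (real q))" using lnq by simp
    have "real q powr (1/2 + \<epsilon> q) = real q powr (1/2) * real q powr (\<epsilon> q)"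
      by (simp add: powr_add)
    also have "real q powr (1/2) = sqrt (real q)" by (simp add: powr_half_sqrt)
    also have "real q powr (\<epsilon> q) = exp (\<epsilon> q * ln (real q))" using q2 by (simp add: powr_def)
    also have "\<epsilon> q * ln (real q) = ln (1 + ln (real q))" using q2 lnq by (simp add: \<epsilon>_def)
    also have "exp (ln (1 + ln (real q))) = 1 + ln (real q)" using lnq by simp
    finally have pw: "real q powr (1/2 + \<epsilon> q) = sqrt (real q) * (1 + ln (real q))" .
    have rpos: "0 \<le> sqrt (real q) * (1 + ln (real q))" using lnq by simp
    show ?thesis
    proof (cases "W \<le> 0")
      case True
      then have "S q W a h = 0" unfolding S_def by simp
      then show ?thesis using pw rpos by simp
    next
      case False
      define n where "n = nat W"
      have Wn: "W = int n" using False unfolding n_def by simp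
      show ?thesis
      proof (cases "q = 2")
        case True
        have "norm (S q W a h) \<le> real n * real q" unfolding Wn by (rule trivial_bound)
        also have "\<dots> \<le> 4" using Wq Wn True by simp
        also have "4 \<le> 3 * sqrt 2"
        proof -
          have "(4/3::real) \<le> sqrt 2" by (rule real_le_rsqrt) (simp add: power2_eq_square)
          then show ?thesis by simp
        qed
        also have "\<dots> \<le> 3 * (sqrt (real q) * (1 + ln (real q)))" using True lnq by simp
        finally show ?thesis using pw by simp
      next
        case False
        have "norm (S q W a h) \<le> sqrt (real q) * (1 + ln (real q))"
          unfolding Wn by (rule main_bound[OF pq False cop])
        also have "\<dots> \<le> 3 * (sqrt (real q) * (1 + ln (real q)))" using rpos by simp
        finally show ?thesis using pw by simp
      qed
    qed
  qed
  have allk: "\<forall>q W a h. prime q \<longrightarrow> W \<le> int q \<longrightarrow> coprime (a * h) (int q) \<longrightarrow>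
       norm (S q W a h) \<le> 3 * real q powr (1/2 + \<epsilon> q)"
    by (intro allI impI, rule key, assumption+)
  show ?thesis
    apply (rule exI[of _ "3::real"])
    apply (rule conjI)
     apply simp
    apply (rule exI[of _ \<epsilon>])
    by (rule conjI[OF lim allk])
qed


end
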